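(* Let $\mathbb{K}$ be either $\mathbb{R}$ or $\mathbb{C}$, with all coefficients and solutions taken in $\mathbb{K}$. Let $(p,q)$ be a conjugate pair. Let $I$ be an infinite set. For all $i \in I$, let $\mathbf{a}_i = (a_{i,j})_{j=1}^{\infty} \in \ell^p$, let $b_i \in \mathbb{K}$, and consider the linear equation in infinitely many variables \[ L_i(\mathbf{x}) = \sum_{j=1}^{\infty} a_{i,j} x_j = b_i. \] Let $M>0$. Suppose that for every finite subset $S$ of $I$ and every $\varepsilon>0$, the finite set of inequalities $\{ |L_i(\mathbf{x}) - b_i| \le \varepsilon : i \in S\}$ has a solution $\mathbf{x}_{S,\varepsilon} \in \ell^q$ with $\|\mathbf{x}_{S,\varepsilon}\|_q \le M$. Then the infinite set of linear equations $\{L_i(\mathbf{x}) = b_i : i \in I\}$ has an exact solution $\mathbf{x} \in \ell^q$ with $\|\mathbf{x}\|_q \le M$.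
   Context: A pair $(p,q)$ is called a conjugate pair if either $p>1$, $q>1$ are real numbers with $1/p + 1/q = 1$, or $p=1$ and $q=\infty$. For $1\le p<\infty$, $\ell^p$ is the space of sequences $\mathbf{a}=(a_j)_{j\ge1}$ with $\|\mathbf{a}\|_p = (\sum_j |a_j|^p)^{1/p}<\infty$, and $\ell^\infty$ is the space of bounded sequences with $\|\mathbf{a}\|_\infty = \sup_j |a_j|$. For $\mathbf{a}\in\ell^p$, $\mathbf{x}\in\ell^q$ the series $\sum_j a_j x_j$ converges absolutely by Hölder's inequality. *)

theory Defs
  imports "HOL-Analysis.Analysis"
begin

definition conjugate_pair :: "real \<Rightarrow> ereal \<Rightarrow> bool" where
  "conjugate_pair p q \<longleftrightarrow>
     (p > 1 \<and> q > 1 \<and> q \<noteq> \<infinity> \<and> 1 / p + 1 / real_of_ereal q = 1) \<or> (p = 1 \<and> q = \<infinity>)"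

text \<open>Membership in l^p for p in [1, infinity] (sequences indexed by nat, starting at 0).\<close>
definition in_lp :: "ereal \<Rightarrow> (nat \<Rightarrow> 'a::real_normed_vector) \<Rightarrow> bool" where
  "in_lp p x \<longleftrightarrow>
     (if p = \<infinity> then (\<exists>B. \<forall>j. norm (x j) \<le> B)
      else summable (\<lambda>j. norm (x j) powr real_of_ereal p))"

definition lp_norm :: "ereal \<Rightarrow> (nat \<Rightarrow> 'a::real_normed_vector) \<Rightarrow> real" where
  "lp_norm p x =
     (if p = \<infinity> then (SUP j. norm (x j))
      else (\<Sum>j. norm (x j) powr real_of_ereal p) powr (1 / real_of_ereal p))"

end

theory Submission
  imports Defs
begin


lemma main_compact:
  fixes a :: "'i \<Rightarrow> nat \<Rightarrow> 'a::{real_normed_field,heine_borel}" and B :: "(nat \<Rightarrow> 'a) set"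
  assumes cB: "compact B"
    and tail: "\<And>i \<delta>. i \<in> I \<Longrightarrow> \<delta> > 0 \<Longrightarrow> \<exists>N. \<forall>x\<in>B. \<forall>n\<ge>N.
               norm ((\<Sum>j. a i j * x j) - (\<Sum>j<n. a i j * x j)) \<le> \<delta>"
    and approx: "\<And>S \<epsilon>. finite S \<Longrightarrow> S \<subseteq> I \<Longrightarrow> \<epsilon> > 0 \<Longrightarrow>
               \<exists>x\<in>B. \<forall>i\<in>S. norm ((\<Sum>j. a i j * x j) - b i) \<le> \<epsilon>"
  shows "\<exists>x\<in>B. \<forall>i\<in>I. (\<Sum>j. a i j * x j) = b i"
proof -
  define N where "N i \<delta> = (SOME N. \<forall>x\<in>B. \<forall>n\<ge>N.
               norm ((\<Sum>j. a i j * x j) - (\<Sum>j<n. a i j * x j)) \<le> \<delta>)" for i \<delta>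
  have N: "\<And>x n. x \<in> B \<Longrightarrow> n \<ge> N i \<delta> \<Longrightarrow>
      norm ((\<Sum>j. a i j * x j) - (\<Sum>j<n. a i j * x j)) \<le> \<delta>" if "i \<in> I" "\<delta> > 0" for i \<delta>
    using someI_ex[OF tail[OF that]] unfolding N_def by blast
  define E where "E = (\<lambda>(i,\<epsilon>). {x::nat\<Rightarrow>'a. \<forall>n\<ge>N i \<epsilon>. norm ((\<Sum>j<n. a i j * x j) - b i) \<le> 2*\<epsilon>})"
  define J where "J = I \<times> {\<epsilon>::real. \<epsilon> > 0}"
  have "B \<inter> (\<Inter>k\<in>J. E k) \<noteq> {}"
  proof (rule compact_imp_fip_image[OF cB])
    fix k assume "k \<in> J"
    obtain i \<epsilon> where k: "k = (i,\<epsilon>)" by (cases k)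
    have "closed {x::nat\<Rightarrow>'a. norm ((\<Sum>j<n. a i j * x j) - b i) \<le> 2*\<epsilon>}" for n
      by (intro closed_Collect_le continuous_on_norm continuous_on_diff continuous_on_sum
          continuous_on_mult continuous_on_const continuous_on_product_coordinates)
    moreover have "E k = (\<Inter>n\<in>{N i \<epsilon>..}. {x::nat\<Rightarrow>'a. norm ((\<Sum>j<n. a i j * x j) - b i) \<le> 2*\<epsilon>})"
      unfolding E_def k by auto
    ultimately show "closed (E k)" by (simp add: closed_INT)
  next
    fix J' assume J': "finite J'" "J' \<subseteq> J"
    define \<epsilon>0 where "\<epsilon>0 = Min (insert 1 (snd ` J'))"
    have e0: "\<epsilon>0 > 0" unfolding \<epsilon>0_def using J' by (subst Min_gr_iff) (auto simp: J_def)
    have e0le: "\<epsilon>0 \<le> snd k" if "k \<in> J'" for k unfolding \<epsilon>0_def using J' that by (intro Min_le) auto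
    obtain x where x: "x \<in> B" "\<forall>i\<in>fst ` J'. norm ((\<Sum>j. a i j * x j) - b i) \<le> \<epsilon>0"
    proof -
      have "fst ` J' \<subseteq> I" using J' by (auto simp: J_def)
      moreover have "finite (fst ` J')" using J' by simp
      ultimately show ?thesis using approx[of "fst ` J'" \<epsilon>0, OF _ _ e0] that by auto
    qed
    have "x \<in> E k" if "k \<in> J'" for k
    proof -
      obtain i \<epsilon> where k: "k = (i,\<epsilon>)" by (cases k)
      have iI: "i \<in> I" "\<epsilon> > 0" using that J' k by (auto simp: J_def)
      have le: "\<epsilon>0 \<le> \<epsilon>" using e0le[OF that] k by simp
      have "norm ((\<Sum>j<n. a i j * x j) - b i) \<le> 2*\<epsilon>" if n: "n \<ge> N i \<epsilon>" for n
      proof -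
        have "norm ((\<Sum>j<n. a i j * x j) - b i) \<le> norm ((\<Sum>j. a i j * x j) - (\<Sum>j<n. a i j * x j))
            + norm ((\<Sum>j. a i j * x j) - b i)"
        proof -
          have "(\<Sum>j<n. a i j * x j) - b i = ((\<Sum>j. a i j * x j) - b i) - ((\<Sum>j. a i j * x j) - (\<Sum>j<n. a i j * x j))"
            by simp
          then show ?thesis using norm_triangle_ineq4 by (metis add.commute)
        qed
        also have "\<dots> \<le> \<epsilon> + \<epsilon>0" using N[OF iI x(1) n] x(2) \<open>k \<in> J'\<close> k
          by (intro add_mono) force+
        finally show ?thesis using le by simp
      qed
      then show ?thesis unfolding E_def k by auto
    qed
    then show "B \<inter> (\<Inter>k\<in>J'. E k) \<noteq> {}" using x by blast
  qed
  then obtain x where x: "x \<in> B" "\<And>k. k \<in> J \<Longrightarrow> x \<in> E k" by blast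
  have "(\<Sum>j. a i j * x j) = b i" if i: "i \<in> I" for i
  proof -
    have "(\<lambda>n. \<Sum>j<n. a i j * x j) \<longlonglongrightarrow> b i"
    proof (rule LIMSEQ_I)
      fix r :: real assume r: "r > 0"
      have "x \<in> E (i, r/3)" using x(2) i r by (auto simp: J_def)
      then have "\<forall>n\<ge>N i (r/3). norm ((\<Sum>j<n. a i j * x j) - b i) < r"
        unfolding E_def using r by force
      then show "\<exists>no. \<forall>n\<ge>no. norm ((\<Sum>j<n. a i j * x j) - b i) < r" by blast
    qed
    then show ?thesis using sums_unique sums_def by metis
  qed
  then show ?thesis using x by blast
qed



lemma tail_le:
  fixes f :: "nat \<Rightarrow> 'a::banach"
  assumes "summable (\<lambda>j. norm (f j))"
  shows "norm (suminf f - (\<Sum>j<n. f j)) \<le> (\<Sum>j. norm (f (j+n)))"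
proof -
  have sf: "summable f" using assms summable_norm_cancel by blast
  have "suminf f - (\<Sum>j<n. f j) = (\<Sum>j. f (j+n))" using suminf_split_initial_segment[OF sf, of n] by simp
  moreover have "summable (\<lambda>j. norm (f (j+n)))" using summable_ignore_initial_segment[OF assms, of n] by simp
  ultimately show ?thesis by (simp add: summable_norm)
qed

lemma young_pt:
  fixes u v :: "'a::real_normed_div_algebra"
  assumes "p > 1" "r > 1" "1/p + 1/r = 1" "t > 0"
  shows "norm (u * v) \<le> t powr p / p * norm u powr p + norm v powr r / (r * t powr r)"
proof -
  have "norm (u * v) = (t * norm u) * (norm v / t)" using assms by (simp add: norm_mult)
  also have "\<dots> \<le> (t * norm u) powr p / p + (norm v / t) powr r / r"
    by (rule Youngs_inequality[OF assms(1-3)]) (use assms(4) in auto)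
  also have "\<dots> = t powr p / p * norm u powr p + norm v powr r / (r * t powr r)"
    using assms by (simp add: powr_mult powr_divide)
  finally show ?thesis .
qed

lemma tail_young:
  fixes a :: "nat \<Rightarrow> 'a::{real_normed_div_algebra,banach}"
  assumes p: "p > 1" "r > 1" "1/p + 1/r = 1" and sa: "summable (\<lambda>j. norm (a j) powr p)"
    and d: "\<delta> > 0" and M: "M > 0"
  shows "\<exists>N. \<forall>x. summable (\<lambda>j. norm (x j) powr r) \<and> (\<Sum>j. norm (x j) powr r) \<le> M powr r \<longrightarrow>
           (\<forall>n\<ge>N. norm ((\<Sum>j. a j * x j) - (\<Sum>j<n. a j * x j)) \<le> \<delta>)"
proof -
  define T where "T = 2 * M powr r / (r * \<delta>) + 1"
  have T0: "T > 0" unfolding T_def using p d M by (simp add: add_pos_nonneg)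
  define t where "t = T powr (1/r)"
  have t0: "t > 0" unfolding t_def using T0 by simp
  have tr: "t powr r = T" unfolding t_def using T0 p by (simp add: powr_powr)
  have hM: "M powr r / (r * T) \<le> \<delta>/2"
  proof -
    have "M powr r / (r * T) \<le> \<delta>/2 \<longleftrightarrow> 2 * M powr r \<le> \<delta> * (r * T)"
      using T0 p d by (simp add: field_simps)
    also have "\<delta> * (r * T) = 2 * M powr r + r * \<delta>" unfolding T_def using p d by (simp add: field_simps)
    finally show ?thesis using p d by simp
  qed
  define g where "g j = t powr p / p * norm (a j) powr p" for j
  have sg: "summable g" unfolding g_def using sa by (intro summable_mult)
  obtain N where N: "\<And>n. n \<ge> N \<Longrightarrow> norm (\<Sum>j. g (j + n)) < \<delta>/2"
    using suminf_exist_split[OF _ sg, of "\<delta>/2"] d by auto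
  show ?thesis
  proof (intro exI allI impI)
    fix x :: "nat \<Rightarrow> 'a" and n
    assume x: "summable (\<lambda>j. norm (x j) powr r) \<and> (\<Sum>j. norm (x j) powr r) \<le> M powr r" and n: "n \<ge> N"
    define h where "h j = norm (x j) powr r / (r * t powr r)" for j
    have sh: "summable h" unfolding h_def using x by (intro summable_divide) auto
    have h0: "h j \<ge> 0" for j unfolding h_def using p t0 by simp
    have g0: "g j \<ge> 0" for j unfolding g_def using p t0 by simp
    have bd: "norm (a j * x j) \<le> g j + h j" for j
      unfolding g_def h_def using young_pt[OF p t0] by blast
    have sgh: "summable (\<lambda>j. g j + h j)" using sg sh by (rule summable_add)
    have sn: "summable (\<lambda>j. norm (a j * x j))"
      by (rule summable_comparison_test'[OF sgh]) (use bd in simp)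
    have sgn: "summable (\<lambda>j. g (j+n))" "summable (\<lambda>j. h (j+n))" "summable (\<lambda>j. norm (a (j+n) * x (j+n)))"
      using summable_ignore_initial_segment[OF sg, of n] summable_ignore_initial_segment[OF sh, of n]
        summable_ignore_initial_segment[OF sn, of n] by simp_all
    have "norm ((\<Sum>j. a j * x j) - (\<Sum>j<n. a j * x j)) \<le> (\<Sum>j. norm (a (j+n) * x (j+n)))"
      using tail_le[OF sn] by simp
    also have "\<dots> \<le> (\<Sum>j. g (j+n) + h (j+n))"
      by (intro suminf_le) (use bd sgn summable_add[OF sgn(1,2)] in auto)
    also have "\<dots> = (\<Sum>j. g (j+n)) + (\<Sum>j. h (j+n))" using sgn by (simp add: suminf_add)
    also have "(\<Sum>j. h (j+n)) \<le> suminf h"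
    proof -
      have "suminf h = (\<Sum>j. h (j+n)) + (\<Sum>j<n. h j)" using suminf_split_initial_segment[OF sh] .
      moreover have "(\<Sum>j<n. h j) \<ge> 0" using h0 by (simp add: sum_nonneg)
      ultimately show ?thesis by simp
    qed
    also have "suminf h = (\<Sum>j. norm (x j) powr r) / (r * t powr r)"
      unfolding h_def using x by (simp add: suminf_divide)
    also have "\<dots> \<le> M powr r / (r * T)" using x tr p T0 by (simp add: divide_right_mono)
    also have "(\<Sum>j. g (j+n)) < \<delta>/2" using N[OF n] by simp
    finally show "norm ((\<Sum>j. a j * x j) - (\<Sum>j<n. a j * x j)) \<le> \<delta>" using hM by linarith
  qed
qed

lemma tail_one:
  fixes a :: "nat \<Rightarrow> 'a::{real_normed_div_algebra,banach}"
  assumes sa: "summable (\<lambda>j. norm (a j))" and d: "\<delta> > 0" and M: "M > 0"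
  shows "\<exists>N. \<forall>x. (\<forall>j. norm (x j) \<le> M) \<longrightarrow>
           (\<forall>n\<ge>N. norm ((\<Sum>j. a j * x j) - (\<Sum>j<n. a j * x j)) \<le> \<delta>)"
proof -
  have sg: "summable (\<lambda>j. M * norm (a j))" using sa by (rule summable_mult)
  obtain N where N: "\<And>n. n \<ge> N \<Longrightarrow> norm (\<Sum>j. M * norm (a (j + n))) < \<delta>"
    using suminf_exist_split[OF d sg] by auto
  show ?thesis
  proof (intro exI allI impI)
    fix x :: "nat \<Rightarrow> 'a" and n
    assume x: "\<forall>j. norm (x j) \<le> M" and n: "n \<ge> N"
    have bd: "norm (a j * x j) \<le> M * norm (a j)" for j
    proof -
      have "norm (a j * x j) = norm (a j) * norm (x j)" by (simp add: norm_mult)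
      also have "\<dots> \<le> norm (a j) * M" by (rule mult_left_mono) (use x in auto)
      finally show ?thesis by (simp add: mult.commute)
    qed
    have sn: "summable (\<lambda>j. norm (a j * x j))"
      by (rule summable_comparison_test'[OF sg]) (use bd in simp)
    have sgn: "summable (\<lambda>j. M * norm (a (j+n)))" "summable (\<lambda>j. norm (a (j+n) * x (j+n)))"
      using summable_ignore_initial_segment[OF sg, of n]
        summable_ignore_initial_segment[OF sn, of n] by simp_all
    have "norm ((\<Sum>j. a j * x j) - (\<Sum>j<n. a j * x j)) \<le> (\<Sum>j. norm (a (j+n) * x (j+n)))"
      using tail_le[OF sn] by simp
    also have "\<dots> \<le> (\<Sum>j. M * norm (a (j+n)))"
      by (intro suminf_le) (use bd sgn in auto)
    also have "\<dots> < \<delta>" using N[OF n] by simp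
    finally show "norm ((\<Sum>j. a j * x j) - (\<Sum>j<n. a j * x j)) \<le> \<delta>" by simp
  qed
qed


lemma compact_box:
  "compact {x :: nat \<Rightarrow> 'a::{real_normed_vector,heine_borel}. \<forall>j. norm (x j) \<le> M}"
proof -
  have "compactin (product_topology (\<lambda>_. euclidean) UNIV) (PiE UNIV (\<lambda>_::nat. cball (0::'a) M))"
    by (simp add: compactin_PiE)
  moreover have "PiE UNIV (\<lambda>_::nat. cball (0::'a) M) = {x. \<forall>j. norm (x j) \<le> M}"
    by (auto simp: PiE_UNIV_domain Pi_def)
  ultimately show ?thesis by (simp add: euclidean_product_topology)
qed


lemma Bfin_char:
  fixes x :: "nat \<Rightarrow> 'a::real_normed_vector"
  assumes r: "r > 1" and M: "M > 0"
  shows "(\<forall>n. (\<Sum>j<n. norm (x j) powr r) \<le> M powr r) \<longleftrightarrow>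
         summable (\<lambda>j. norm (x j) powr r) \<and> (\<Sum>j. norm (x j) powr r) powr (1/r) \<le> M"
proof
  assume H: "\<forall>n. (\<Sum>j<n. norm (x j) powr r) \<le> M powr r"
  have s: "summable (\<lambda>j. norm (x j) powr r)"
    by (rule summableI_nonneg_bounded[where x="M powr r"]) (use H in auto)
  have "(\<Sum>j. norm (x j) powr r) \<le> M powr r" by (rule suminf_le_const[OF s]) (use H in auto)
  then have "(\<Sum>j. norm (x j) powr r) powr (1/r) \<le> (M powr r) powr (1/r)"
    by (intro powr_mono2) (use r s in \<open>auto intro!: suminf_nonneg\<close>)
  also have "\<dots> = M" using r M by (simp add: powr_powr)
  finally show "summable (\<lambda>j. norm (x j) powr r) \<and> (\<Sum>j. norm (x j) powr r) powr (1/r) \<le> M"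
    using s by simp
next
  assume H: "summable (\<lambda>j. norm (x j) powr r) \<and> (\<Sum>j. norm (x j) powr r) powr (1/r) \<le> M"
  define S where "S = (\<Sum>j. norm (x j) powr r)"
  have S0: "S \<ge> 0" unfolding S_def using H by (auto intro!: suminf_nonneg)
  have "S = (S powr (1/r)) powr r" using r S0 by (simp add: powr_powr)
  also have "\<dots> \<le> M powr r" by (intro powr_mono2) (use r H S_def in auto)
  finally have SM: "S \<le> M powr r" .
  show "\<forall>n. (\<Sum>j<n. norm (x j) powr r) \<le> M powr r"
  proof
    fix n
    have "(\<Sum>j<n. norm (x j) powr r) \<le> S" unfolding S_def using H by (intro sum_le_suminf) auto
    then show "(\<Sum>j<n. norm (x j) powr r) \<le> M powr r" using SM by simp
  qed
qed


lemma compact_Bfin: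
  assumes r: "r > 1" and M: "M > 0"
  shows "compact {x :: nat \<Rightarrow> 'a::{real_normed_vector,heine_borel}. \<forall>n. (\<Sum>j<n. norm (x j) powr r) \<le> M powr r}"
proof -
  let ?B = "{x :: nat \<Rightarrow> 'a. \<forall>n. (\<Sum>j<n. norm (x j) powr r) \<le> M powr r}"
  have sub: "?B \<subseteq> {x. \<forall>j. norm (x j) \<le> M}"
  proof safe
    fix x :: "nat \<Rightarrow> 'a" and j assume H: "\<forall>n. (\<Sum>j<n. norm (x j) powr r) \<le> M powr r"
    have "norm (x j) powr r \<le> (\<Sum>i<Suc j. norm (x i) powr r)"
      by (rule member_le_sum) auto
    also have "\<dots> \<le> M powr r" using H by blast
    finally have le: "norm (x j) powr r \<le> M powr r" .
    show "norm (x j) \<le> M"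
    proof (rule ccontr)
      assume "\<not> norm (x j) \<le> M"
      then have "M powr r < norm (x j) powr r" using r M by (intro powr_less_mono2) auto
      then show False using le by simp
    qed
  qed
  have cl: "closed ?B"
  proof -
    have "closed {x :: nat \<Rightarrow> 'a. (\<Sum>j<n. norm (x j) powr r) \<le> M powr r}" for n
    proof (rule closed_Collect_le)
      have c: "continuous_on UNIV (\<lambda>x::nat\<Rightarrow>'a. norm (x j) powr r)" for j
        by (rule continuous_on_powr'[OF continuous_on_norm[OF continuous_on_product_coordinates] continuous_on_const])
          (use r in auto)
      show "continuous_on UNIV (\<lambda>x::nat\<Rightarrow>'a. \<Sum>j<n. norm (x j) powr r)"
        by (rule continuous_on_sum) (rule c)
    qed (rule continuous_on_const)
    then show ?thesis by (simp add: Collect_all_eq closed_INT)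
  qed
  have eq: "{x. \<forall>j. norm (x j) \<le> M} \<inter> ?B = ?B" using sub by blast
  show ?thesis using compact_Int_closed[OF compact_box[of M] cl] unfolding eq .
qed


lemma Binf_char:
  fixes x :: "nat \<Rightarrow> 'a::real_normed_vector"
  shows "(\<forall>j. norm (x j) \<le> M) \<longleftrightarrow> in_lp \<infinity> x \<and> lp_norm \<infinity> x \<le> M"
proof
  assume H: "\<forall>j. norm (x j) \<le> M"
  then show "in_lp \<infinity> x \<and> lp_norm \<infinity> x \<le> M"
    unfolding in_lp_def lp_norm_def by (auto intro!: cSUP_least)
next
  assume H: "in_lp \<infinity> x \<and> lp_norm \<infinity> x \<le> M"
  then obtain C where C: "\<forall>j. norm (x j) \<le> C" unfolding in_lp_def by auto
  have bdd: "bdd_above (range (\<lambda>j. norm (x j)))" using C by (auto intro: bdd_aboveI2)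
  show "\<forall>j. norm (x j) \<le> M"
  proof
    fix j
    have "norm (x j) \<le> (SUP j. norm (x j))" by (rule cSUP_upper[OF _ bdd]) auto
    then show "norm (x j) \<le> M" using H unfolding lp_norm_def by simp
  qed
qed



lemma gen:
  fixes a :: "'i \<Rightarrow> nat \<Rightarrow> 'a::{real_normed_field,heine_borel,banach}" and b :: "'i \<Rightarrow> 'a"
  assumes cp: "conjugate_pair p q" and M: "M > 0"
    and ha: "\<forall>i\<in>I. in_lp (ereal p) (a i)"
    and hx: "\<forall>S \<epsilon>. finite S \<and> S \<subseteq> I \<and> \<epsilon> > 0 \<longrightarrow>
               (\<exists>x :: nat \<Rightarrow> 'a. in_lp q x \<and> lp_norm q x \<le> M \<and>
                  (\<forall>i\<in>S. norm ((\<Sum>j. a i j * x j) - b i) \<le> \<epsilon>))"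
  shows "\<exists>x :: nat \<Rightarrow> 'a. in_lp q x \<and> lp_norm q x \<le> M \<and> (\<forall>i\<in>I. (\<Sum>j. a i j * x j) = b i)"
proof -
  from cp consider (fin) "p > 1" "q > 1" "q \<noteq> \<infinity>" "1/p + 1/real_of_ereal q = 1"
    | (inf) "p = 1" "q = \<infinity>" unfolding conjugate_pair_def by blast
  then show ?thesis
  proof cases
    case fin
    define r where "r = real_of_ereal q"
    have qr: "q = ereal r" unfolding r_def using fin by (cases q) auto
    have r1: "r > 1" using fin qr by simp
    have pr: "1/p + 1/r = 1" using fin r_def by simp
    define B where "B = {x :: nat \<Rightarrow> 'a. \<forall>n. (\<Sum>j<n. norm (x j) powr r) \<le> M powr r}"
    have Bchar: "x \<in> B \<longleftrightarrow> in_lp q x \<and> lp_norm q x \<le> M" for x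
      unfolding B_def in_lp_def lp_norm_def qr using Bfin_char[OF r1 M, of x] by simp
    have "\<exists>x\<in>B. \<forall>i\<in>I. (\<Sum>j. a i j * x j) = b i"
    proof (rule main_compact)
      show "compact B" unfolding B_def by (rule compact_Bfin[OF r1 M])
    next
      fix i and \<delta> :: real assume i: "i \<in> I" and d: "\<delta> > 0"
      have sa: "summable (\<lambda>j. norm (a i j) powr p)" using ha i unfolding in_lp_def by simp
      have ex: "\<exists>N. \<forall>x. summable (\<lambda>j. norm (x j) powr r) \<and> (\<Sum>j. norm (x j) powr r) \<le> M powr r \<longrightarrow>
           (\<forall>n\<ge>N. norm ((\<Sum>j. a i j * x j) - (\<Sum>j<n. a i j * x j)) \<le> \<delta>)"
        by (rule tail_young[OF fin(1) r1 pr sa d M])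
      then obtain N where N: "\<forall>x. summable (\<lambda>j. norm (x j) powr r) \<and> (\<Sum>j. norm (x j) powr r) \<le> M powr r \<longrightarrow>
           (\<forall>n\<ge>N. norm ((\<Sum>j. a i j * x j) - (\<Sum>j<n. a i j * x j)) \<le> \<delta>)" ..
      show "\<exists>N. \<forall>x\<in>B. \<forall>n\<ge>N. norm ((\<Sum>j. a i j * x j) - (\<Sum>j<n. a i j * x j)) \<le> \<delta>"
      proof (intro exI ballI allI impI)
        fix x n assume x: "x \<in> B" and n: "N \<le> n"
        have H: "\<And>n. (\<Sum>j<n. norm (x j) powr r) \<le> M powr r" using x unfolding B_def by blast
        have s: "summable (\<lambda>j. norm (x j) powr r)"
          by (rule summableI_nonneg_bounded[where x="M powr r", OF _ H]) simp
        have le: "(\<Sum>j. norm (x j) powr r) \<le> M powr r" by (rule suminf_le_const[OF s H])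
        show "norm ((\<Sum>j. a i j * x j) - (\<Sum>j<n. a i j * x j)) \<le> \<delta>"
          using N[rule_format, OF conjI[OF s le] n] .
      qed
    next
      fix S and \<epsilon> :: real assume "finite S" "S \<subseteq> I" "\<epsilon> > 0"
      then obtain x where "in_lp q x" "lp_norm q x \<le> M" "\<forall>i\<in>S. norm ((\<Sum>j. a i j * x j) - b i) \<le> \<epsilon>"
        using hx by blast
      then show "\<exists>x\<in>B. \<forall>i\<in>S. norm ((\<Sum>j. a i j * x j) - b i) \<le> \<epsilon>" using Bchar by blast
    qed
    then show ?thesis using Bchar by blast
  next
    case inf
    define B where "B = {x :: nat \<Rightarrow> 'a. \<forall>j. norm (x j) \<le> M}"
    have Bchar: "x \<in> B \<longleftrightarrow> in_lp q x \<and> lp_norm q x \<le> M" for x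
      unfolding B_def inf using Binf_char[of x M] by simp
    have "\<exists>x\<in>B. \<forall>i\<in>I. (\<Sum>j. a i j * x j) = b i"
    proof (rule main_compact)
      show "compact B" unfolding B_def by (rule compact_box)
    next
      fix i and \<delta> :: real assume i: "i \<in> I" and d: "\<delta> > 0"
      have sa: "summable (\<lambda>j. norm (a i j))" using ha i unfolding in_lp_def inf by simp
      obtain N where N: "\<forall>x. (\<forall>j. norm (x j) \<le> M) \<longrightarrow>
           (\<forall>n\<ge>N. norm ((\<Sum>j. a i j * x j) - (\<Sum>j<n. a i j * x j)) \<le> \<delta>)"
        using tail_one[OF sa d M] by blast
      show "\<exists>N. \<forall>x\<in>B. \<forall>n\<ge>N. norm ((\<Sum>j. a i j * x j) - (\<Sum>j<n. a i j * x j)) \<le> \<delta>"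
        using N unfolding B_def by blast
    next
      fix S and \<epsilon> :: real assume "finite S" "S \<subseteq> I" "\<epsilon> > 0"
      then obtain x where "in_lp q x" "lp_norm q x \<le> M" "\<forall>i\<in>S. norm ((\<Sum>j. a i j * x j) - b i) \<le> \<epsilon>"
        using hx by blast
      then show "\<exists>x\<in>B. \<forall>i\<in>S. norm ((\<Sum>j. a i j * x j) - b i) \<le> \<epsilon>" using Bchar by blast
    qed
    then show ?thesis using Bchar by blast
  qed
qed

theorem theorem2:
  fixes p :: real and q :: ereal and I :: "'i set" and M :: real
  assumes "conjugate_pair p q" and "infinite I" and "M > 0"
  shows "(\<forall>(a :: 'i \<Rightarrow> nat \<Rightarrow> real) (b :: 'i \<Rightarrow> real).
            (\<forall>i\<in>I. in_lp (ereal p) (a i)) \<longrightarrow>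
            (\<forall>S \<epsilon>. finite S \<and> S \<subseteq> I \<and> \<epsilon> > 0 \<longrightarrow>
               (\<exists>x :: nat \<Rightarrow> real. in_lp q x \<and> lp_norm q x \<le> M \<and>
                  (\<forall>i\<in>S. norm ((\<Sum>j. a i j * x j) - b i) \<le> \<epsilon>))) \<longrightarrow>
            (\<exists>x :: nat \<Rightarrow> real. in_lp q x \<and> lp_norm q x \<le> M \<and>
               (\<forall>i\<in>I. (\<Sum>j. a i j * x j) = b i)))
       \<and> (\<forall>(a :: 'i \<Rightarrow> nat \<Rightarrow> complex) (b :: 'i \<Rightarrow> complex).
            (\<forall>i\<in>I. in_lp (ereal p) (a i)) \<longrightarrow>
            (\<forall>S \<epsilon>. finite S \<and> S \<subseteq> I \<and> \<epsilon> > 0 \<longrightarrow>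
               (\<exists>x :: nat \<Rightarrow> complex. in_lp q x \<and> lp_norm q x \<le> M \<and>
                  (\<forall>i\<in>S. norm ((\<Sum>j. a i j * x j) - b i) \<le> \<epsilon>))) \<longrightarrow>
            (\<exists>x :: nat \<Rightarrow> complex. in_lp q x \<and> lp_norm q x \<le> M \<and>
               (\<forall>i\<in>I. (\<Sum>j. a i j * x j) = b i)))"
    by (intro conjI allI impI; rule gen[OF assms(1) assms(3)]; assumption)

end
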